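(* Let $\mathcal{C}$ be a d-category and let $\omega,\psi$ be paths in $\mathcal{C}$ with $\omega\simeq\psi$. Then the track objects $\widehat\omega$ and $\widehat\psi$ are isomorphic as $\mathcal{C}$-automata.
   Context: A d-category is a small category $\mathcal{C}$ with wide subcategories $\mathcal{C}^+$ (formorphisms) and $\mathcal{C}^-$ (backmorphisms) such that an invertible $\varphi$ is in $\mathcal{C}^+$ iff $\varphi^{-1}\in\mathcal{C}^-$. A linear category is a bipointed d-category isomorphic to a finite (possibly empty) concatenation (gluing $\top$ of one to $\bot$ of the next) of $\mathbf S$ (one formorphism $\bot\to\top$), $\mathbf T$ (one backmorphism $\top\to\bot$), $\mathbf I$ (mutually inverse formorphism $\bot\to\top$ and backmorphism $\top\to\bot$). A path in $\mathcal{C}$ is a d-functor $\omega:\mathcal I\to\mathcal{C}$ from a linear category. Write $\omega\preceq\psi$ if there is a basepoint-preserving d-functor $F$ between their domains with $\psi\circ F=\omega$; $\simeq$ is the equivalence relation generated by $\preceq$. A $\mathcal{C}$-automaton is a presheaf $X:\mathcal{C}^{op}\to\mathbf{Set}$ with sets of start and accept elements; morphisms are presheaf maps preserving them. The track object of $\omega:\mathcal I\to\mathcal{C}$ is the automaton $\widehat\omega=\operatorname{colim}_{i\in\mathcal I}\mathcal{C}(-,\omega(i))$ with single start element the image of $\mathrm{id}_{\omega(\bot)}$ and single accept element the image of $\mathrm{id}_{\omega(\top)}$. *)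

theory Defs
  imports Main
begin

text \<open>Comp C g f is the composite "g after f" (defined when Cod f = Dom g).\<close>
record ('o, 'm) cat =
  Obj  :: "'o set"
  Mor  :: "'m set"
  Dom  :: "'m \<Rightarrow> 'o"
  Cod  :: "'m \<Rightarrow> 'o"
  Id   :: "'o \<Rightarrow> 'm"
  Comp :: "'m \<Rightarrow> 'm \<Rightarrow> 'm"

definition hom :: "('o, 'm, 'z) cat_scheme \<Rightarrow> 'o \<Rightarrow> 'o \<Rightarrow> 'm set" where
  "hom C a b = {f \<in> Mor C. Dom C f = a \<and> Cod C f = b}"

definition category :: "('o, 'm, 'z) cat_scheme \<Rightarrow> bool" where
  "category C \<longleftrightarrow>
     (\<forall>f\<in>Mor C. Dom C f \<in> Obj C \<and> Cod C f \<in> Obj C) \<and>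
     (\<forall>a\<in>Obj C. Id C a \<in> hom C a a) \<and>
     (\<forall>f\<in>Mor C. \<forall>g\<in>Mor C. Cod C f = Dom C g \<longrightarrow> Comp C g f \<in> hom C (Dom C f) (Cod C g)) \<and>
     (\<forall>f\<in>Mor C. Comp C (Id C (Cod C f)) f = f \<and> Comp C f (Id C (Dom C f)) = f) \<and>
     (\<forall>f\<in>Mor C. \<forall>g\<in>Mor C. \<forall>h\<in>Mor C. Cod C f = Dom C g \<longrightarrow> Cod C g = Dom C h \<longrightarrow>
        Comp C h (Comp C g f) = Comp C (Comp C h g) f)"

definition is_inverse :: "('o, 'm, 'z) cat_scheme \<Rightarrow> 'm \<Rightarrow> 'm \<Rightarrow> bool" where
  "is_inverse C f g \<longleftrightarrow> f \<in> Mor C \<and> g \<in> Mor C \<and> Dom C g = Cod C f \<and> Cod C g = Dom C f \<and>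
     Comp C g f = Id C (Dom C f) \<and> Comp C f g = Id C (Cod C f)"

definition wide_subcat :: "('o, 'm, 'z) cat_scheme \<Rightarrow> 'm set \<Rightarrow> bool" where
  "wide_subcat C S \<longleftrightarrow> S \<subseteq> Mor C \<and> (\<forall>a\<in>Obj C. Id C a \<in> S) \<and>
     (\<forall>f\<in>S. \<forall>g\<in>S. Cod C f = Dom C g \<longrightarrow> Comp C g f \<in> S)"

definition "functor" ::
  "('o, 'm, 'z) cat_scheme \<Rightarrow> ('p, 'n, 'y) cat_scheme \<Rightarrow> ('o \<Rightarrow> 'p) \<Rightarrow> ('m \<Rightarrow> 'n) \<Rightarrow> bool" where
  "functor C D Fo Fm \<longleftrightarrow>
     (\<forall>a\<in>Obj C. Fo a \<in> Obj D) \<and>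
     (\<forall>f\<in>Mor C. Fm f \<in> hom D (Fo (Dom C f)) (Fo (Cod C f))) \<and>
     (\<forall>a\<in>Obj C. Fm (Id C a) = Id D (Fo a)) \<and>
     (\<forall>f\<in>Mor C. \<forall>g\<in>Mor C. Cod C f = Dom C g \<longrightarrow> Fm (Comp C g f) = Comp D (Fm g) (Fm f))"

record ('o, 'm) dcat = "('o, 'm) cat" +
  Fwd :: "'m set"
  Bwd :: "'m set"

definition dcategory :: "('o, 'm, 'z) dcat_scheme \<Rightarrow> bool" where
  "dcategory C \<longleftrightarrow> category C \<and> wide_subcat C (Fwd C) \<and> wide_subcat C (Bwd C) \<and>
     (\<forall>f g. is_inverse C f g \<longrightarrow> (f \<in> Fwd C \<longleftrightarrow> g \<in> Bwd C))"

definition dfunctor ::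
  "('o, 'm, 'z) dcat_scheme \<Rightarrow> ('p, 'n, 'y) dcat_scheme \<Rightarrow> ('o \<Rightarrow> 'p) \<Rightarrow> ('m \<Rightarrow> 'n) \<Rightarrow> bool" where
  "dfunctor C D Fo Fm \<longleftrightarrow> functor C D Fo Fm \<and> Fm ` Fwd C \<subseteq> Fwd D \<and> Fm ` Bwd C \<subseteq> Bwd D"

text \<open>Building blocks: SegS = S (one formorphism bot -> top), SegT = T (one backmorphism
 top -> bot), SegI = I (mutually inverse formorphism bot -> top and backmorphism top -> bot).
 The concatenation of a word ws of length n has objects 0..n (bot = 0, top = n, the k-th
 block glued between k and k+1).  Computing the glued (pushout) d-category explicitly:
 it is thin, with a (unique) morphism i -> j iff all blocks between i and j point the
 right way; morphisms i -> j with i <= j are formorphisms, those with j <= i backmorphisms.\<close>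

datatype seg = SegS | SegT | SegI

definition larr :: "seg list \<Rightarrow> nat \<Rightarrow> nat \<Rightarrow> bool" where
  "larr ws i j \<longleftrightarrow> i \<le> length ws \<and> j \<le> length ws \<and>
     (\<forall>k. i \<le> k \<and> k < j \<longrightarrow> ws ! k \<noteq> SegT) \<and>
     (\<forall>k. j \<le> k \<and> k < i \<longrightarrow> ws ! k \<noteq> SegS)"

definition lin :: "seg list \<Rightarrow> (nat, nat \<times> nat) dcat" where
  "lin ws = \<lparr> Obj = {0..length ws},
             Mor = {(i, j). larr ws i j},
             Dom = fst, Cod = snd,
             Id = (\<lambda>i. (i, i)),
             Comp = (\<lambda>g f. (fst f, snd g)),
             Fwd = {(i, j). larr ws i j \<and> i \<le> j},
             Bwd = {(i, j). larr ws i j \<and> j \<le> i} \<rparr>"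

text \<open>A path: a linear category (given by its word) together with a d-functor into C
 (object map and morphism map).  Bottom is 0, top is length ws.\<close>
type_synonym ('o, 'm) path = "seg list \<times> (nat \<Rightarrow> 'o) \<times> (nat \<times> nat \<Rightarrow> 'm)"

definition pword :: "('o, 'm) path \<Rightarrow> seg list" where "pword p = fst p"
definition pobj :: "('o, 'm) path \<Rightarrow> nat \<Rightarrow> 'o" where "pobj p = fst (snd p)"
definition pmor :: "('o, 'm) path \<Rightarrow> nat \<times> nat \<Rightarrow> 'm" where "pmor p = snd (snd p)"

definition is_path :: "('o, 'm, 'z) dcat_scheme \<Rightarrow> ('o, 'm) path \<Rightarrow> bool" where
  "is_path C p \<longleftrightarrow> dfunctor (lin (pword p)) C (pobj p) (pmor p)"

definition path_le :: "('o, 'm, 'z) dcat_scheme \<Rightarrow> ('o, 'm) path \<Rightarrow> ('o, 'm) path \<Rightarrow> bool" where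
  "path_le C p q \<longleftrightarrow> is_path C p \<and> is_path C q \<and>
     (\<exists>Fo Fm. dfunctor (lin (pword p)) (lin (pword q)) Fo Fm \<and>
        Fo 0 = 0 \<and> Fo (length (pword p)) = length (pword q) \<and>
        (\<forall>x\<in>Obj (lin (pword p)). pobj q (Fo x) = pobj p x) \<and>
        (\<forall>u\<in>Mor (lin (pword p)). pmor q (Fm u) = pmor p u))"

definition path_equiv :: "('o, 'm, 'z) dcat_scheme \<Rightarrow> ('o, 'm) path \<Rightarrow> ('o, 'm) path \<Rightarrow> bool" where
  "path_equiv C = equivclp (path_le C)"

text \<open>A presheaf X on C: sets Elt X c and right action Act X f : X(Cod f) -> X(Dom f).
 Start/accept elements are elements of the presheaf, tagged with their object.\<close>
record ('o, 'm, 'x) automaton =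
  Elt    :: "'o \<Rightarrow> 'x set"
  Act    :: "'m \<Rightarrow> 'x \<Rightarrow> 'x"
  Start  :: "('o \<times> 'x) set"
  Accept :: "('o \<times> 'x) set"

definition is_automaton :: "('o, 'm, 'z) cat_scheme \<Rightarrow> ('o, 'm, 'x) automaton \<Rightarrow> bool" where
  "is_automaton C X \<longleftrightarrow>
     (\<forall>f\<in>Mor C. \<forall>x\<in>Elt X (Cod C f). Act X f x \<in> Elt X (Dom C f)) \<and>
     (\<forall>a\<in>Obj C. \<forall>x\<in>Elt X a. Act X (Id C a) x = x) \<and>
     (\<forall>f\<in>Mor C. \<forall>g\<in>Mor C. Cod C f = Dom C g \<longrightarrow>
        (\<forall>x\<in>Elt X (Cod C g). Act X (Comp C g f) x = Act X f (Act X g x))) \<and>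
     Start X \<subseteq> {(a, x). a \<in> Obj C \<and> x \<in> Elt X a} \<and>
     Accept X \<subseteq> {(a, x). a \<in> Obj C \<and> x \<in> Elt X a}"

definition aut_hom :: "('o, 'm, 'z) cat_scheme \<Rightarrow> ('o, 'm, 'x) automaton \<Rightarrow> ('o, 'm, 'y) automaton
     \<Rightarrow> ('o \<Rightarrow> 'x \<Rightarrow> 'y) \<Rightarrow> bool" where
  "aut_hom C X Y \<eta> \<longleftrightarrow>
     (\<forall>a\<in>Obj C. \<forall>x\<in>Elt X a. \<eta> a x \<in> Elt Y a) \<and>
     (\<forall>f\<in>Mor C. \<forall>x\<in>Elt X (Cod C f). \<eta> (Dom C f) (Act X f x) = Act Y f (\<eta> (Cod C f) x)) \<and>
     (\<forall>(a, x)\<in>Start X. (a, \<eta> a x) \<in> Start Y) \<and>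
     (\<forall>(a, x)\<in>Accept X. (a, \<eta> a x) \<in> Accept Y)"

definition aut_iso :: "('o, 'm, 'z) cat_scheme \<Rightarrow> ('o, 'm, 'x) automaton \<Rightarrow> ('o, 'm, 'y) automaton \<Rightarrow> bool" where
  "aut_iso C X Y \<longleftrightarrow> (\<exists>\<eta> \<theta>. aut_hom C X Y \<eta> \<and> aut_hom C Y X \<theta> \<and>
     (\<forall>a\<in>Obj C. \<forall>x\<in>Elt X a. \<theta> a (\<eta> a x) = x) \<and>
     (\<forall>a\<in>Obj C. \<forall>y\<in>Elt Y a. \<eta> a (\<theta> a y) = y))"

text \<open>The colimit of representables colim_i C(-, \<omega> i), computed objectwise in Set:
 at object c it is the quotient of the disjoint union of the C(c, \<omega> i) (pairs (i, h))
 by the equivalence relation generated by (i, h) ~ (j, \<omega>(u) \<circ> h) for u : i -> j.\<close>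

definition track_carrier :: "('o, 'm, 'z) cat_scheme \<Rightarrow> ('o, 'm) path \<Rightarrow> 'o \<Rightarrow> (nat \<times> 'm) set" where
  "track_carrier C p c = {(i, h). i \<in> Obj (lin (pword p)) \<and> h \<in> hom C c (pobj p i)}"

definition track_step :: "('o, 'm, 'z) cat_scheme \<Rightarrow> ('o, 'm) path \<Rightarrow> 'o \<Rightarrow> ((nat \<times> 'm) \<times> (nat \<times> 'm)) set" where
  "track_step C p c = {((i, h), (j, Comp C (pmor p u) h)) | i j h u.
      (i, h) \<in> track_carrier C p c \<and> u \<in> Mor (lin (pword p)) \<and>
      Dom (lin (pword p)) u = i \<and> Cod (lin (pword p)) u = j}"

definition track_rel :: "('o, 'm, 'z) cat_scheme \<Rightarrow> ('o, 'm) path \<Rightarrow> 'o \<Rightarrow> ((nat \<times> 'm) \<times> (nat \<times> 'm)) set" where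
  "track_rel C p c = (track_step C p c \<union> (track_step C p c)\<inverse>)\<^sup>*"

definition track :: "('o, 'm, 'z) cat_scheme \<Rightarrow> ('o, 'm) path \<Rightarrow> ('o, 'm, (nat \<times> 'm) set) automaton" where
  "track C p = \<lparr>
     Elt = (\<lambda>c. if c \<in> Obj C then track_carrier C p c // track_rel C p c else {}),
     Act = (\<lambda>f X. track_rel C p (Dom C f) `` ((\<lambda>(i, h). (i, Comp C h f)) ` X)),
     Start = {(pobj p 0, track_rel C p (pobj p 0) `` {(0, Id C (pobj p 0))})},
     Accept = {(pobj p (length (pword p)),
                track_rel C p (pobj p (length (pword p))) ``
                  {(length (pword p), Id C (pobj p (length (pword p))))})} \<rparr>"

end

theory Submission
  imports Defs
begin

lemma aut_iso_refl: "aut_iso C X X"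
  unfolding aut_iso_def aut_hom_def
  by (rule exI[of _ "\<lambda>a x. x"], rule exI[of _ "\<lambda>a x. x"]) auto

lemma aut_iso_sym: "aut_iso C X Y \<Longrightarrow> aut_iso C Y X"
  unfolding aut_iso_def by blast

lemma aut_hom_trans:
  assumes cat: "category C" and h1: "aut_hom C X Y \<eta>" and h2: "aut_hom C Y Z \<eta>'"
  shows "aut_hom C X Z (\<lambda>a x. \<eta>' a (\<eta> a x))"
proof -
  have cod: "\<And>f. f \<in> Mor C \<Longrightarrow> Cod C f \<in> Obj C" using cat unfolding category_def by simp
  have a1: "\<And>a x. a \<in> Obj C \<Longrightarrow> x \<in> Elt X a \<Longrightarrow> \<eta> a x \<in> Elt Y a"
    and a2: "\<And>f x. f \<in> Mor C \<Longrightarrow> x \<in> Elt X (Cod C f) \<Longrightarrow> \<eta> (Dom C f) (Act X f x) = Act Y f (\<eta> (Cod C f) x)"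
    and a3: "\<And>a x. (a, x) \<in> Start X \<Longrightarrow> (a, \<eta> a x) \<in> Start Y"
    and a4: "\<And>a x. (a, x) \<in> Accept X \<Longrightarrow> (a, \<eta> a x) \<in> Accept Y"
    using h1 unfolding aut_hom_def by auto
  have b1: "\<And>a x. a \<in> Obj C \<Longrightarrow> x \<in> Elt Y a \<Longrightarrow> \<eta>' a x \<in> Elt Z a"
    and b2: "\<And>f x. f \<in> Mor C \<Longrightarrow> x \<in> Elt Y (Cod C f) \<Longrightarrow> \<eta>' (Dom C f) (Act Y f x) = Act Z f (\<eta>' (Cod C f) x)"
    and b3: "\<And>a x. (a, x) \<in> Start Y \<Longrightarrow> (a, \<eta>' a x) \<in> Start Z"
    and b4: "\<And>a x. (a, x) \<in> Accept Y \<Longrightarrow> (a, \<eta>' a x) \<in> Accept Z"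
    using h2 unfolding aut_hom_def by auto
  show ?thesis unfolding aut_hom_def
  proof (intro conjI ballI)
    fix a x assume "a \<in> Obj C" "x \<in> Elt X a" then show "\<eta>' a (\<eta> a x) \<in> Elt Z a" using a1 b1 by simp
  next
    fix f x assume f: "f \<in> Mor C" and x: "x \<in> Elt X (Cod C f)"
    have "\<eta> (Cod C f) x \<in> Elt Y (Cod C f)" using a1[OF cod[OF f] x] .
    then show "\<eta>' (Dom C f) (\<eta> (Dom C f) (Act X f x)) = Act Z f (\<eta>' (Cod C f) (\<eta> (Cod C f) x))"
      using a2[OF f x] b2[OF f] by simp
  next
    fix ax assume "ax \<in> Start X" then show "case ax of (a, x) \<Rightarrow> (a, \<eta>' a (\<eta> a x)) \<in> Start Z"
      using a3 b3 by (cases ax) simp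
  next
    fix ax assume "ax \<in> Accept X" then show "case ax of (a, x) \<Rightarrow> (a, \<eta>' a (\<eta> a x)) \<in> Accept Z"
      using a4 b4 by (cases ax) simp
  qed
qed

lemma aut_iso_trans:
  assumes cat: "category C" and "aut_iso C X Y" and "aut_iso C Y Z"
  shows "aut_iso C X Z"
proof -
  obtain \<eta> \<theta> where a: "aut_hom C X Y \<eta>" "aut_hom C Y X \<theta>"
    "\<forall>a\<in>Obj C. \<forall>x\<in>Elt X a. \<theta> a (\<eta> a x) = x" "\<forall>a\<in>Obj C. \<forall>y\<in>Elt Y a. \<eta> a (\<theta> a y) = y"
    using assms(2) unfolding aut_iso_def by blast
  obtain \<eta>' \<theta>' where b: "aut_hom C Y Z \<eta>'" "aut_hom C Z Y \<theta>'"
    "\<forall>a\<in>Obj C. \<forall>x\<in>Elt Y a. \<theta>' a (\<eta>' a x) = x" "\<forall>a\<in>Obj C. \<forall>y\<in>Elt Z a. \<eta>' a (\<theta>' a y) = y"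
    using assms(3) unfolding aut_iso_def by blast
  have e1: "\<forall>a\<in>Obj C. \<forall>x\<in>Elt X a. \<eta> a x \<in> Elt Y a" using a(1) unfolding aut_hom_def by blast
  have e2: "\<forall>a\<in>Obj C. \<forall>x\<in>Elt Z a. \<theta>' a x \<in> Elt Y a" using b(2) unfolding aut_hom_def by blast
  have i1: "\<forall>a\<in>Obj C. \<forall>x\<in>Elt X a. \<theta> a (\<theta>' a (\<eta>' a (\<eta> a x))) = x"
    using a(3) b(3) e1 by simp
  have i2: "\<forall>a\<in>Obj C. \<forall>y\<in>Elt Z a. \<eta>' a (\<eta> a (\<theta> a (\<theta>' a y))) = y"
    using a(4) b(4) e2 by simp
  show ?thesis unfolding aut_iso_def
    using aut_hom_trans[OF cat a(1) b(1)] aut_hom_trans[OF cat b(2) a(2)] i1 i2 by blast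
qed

lemma rel_sym: "(x, y) \<in> (S \<union> S\<inverse>)\<^sup>* \<Longrightarrow> (y, x) \<in> (S \<union> S\<inverse>)\<^sup>*"
proof -
  assume a: "(x, y) \<in> (S \<union> S\<inverse>)\<^sup>*"
  have "sym ((S \<union> S\<inverse>)\<^sup>*)" by (rule sym_rtrancl[OF sym_Un_converse])
  then show ?thesis using a by (rule symD)
qed

lemma rel_resp:
  assumes "(x, y) \<in> (S \<union> S\<inverse>)\<^sup>*"
    and "\<And>a b. (a, b) \<in> S \<Longrightarrow> (G a, G b) \<in> (T \<union> T\<inverse>)\<^sup>*"
  shows "(G x, G y) \<in> (T \<union> T\<inverse>)\<^sup>*"
  using assms(1)
proof (induction rule: rtrancl_induct)
  case base then show ?case by simp
next
  case (step y z)
  have "(G y, G z) \<in> (T \<union> T\<inverse>)\<^sup>*"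
  proof (cases "(y, z) \<in> S")
    case True then show ?thesis using assms(2) by simp
  next
    case False then have "(z, y) \<in> S" using step(2) by simp
    then show ?thesis using assms(2) rel_sym by metis
  qed
  then show ?case using step(3) rtrancl_trans by metis
qed

lemma class_resp:
  assumes "\<And>a b. (a, b) \<in> S \<Longrightarrow> (G a, G b) \<in> (T \<union> T\<inverse>)\<^sup>*"
  shows "(T \<union> T\<inverse>)\<^sup>* `` (G ` ((S \<union> S\<inverse>)\<^sup>* `` {x})) = (T \<union> T\<inverse>)\<^sup>* `` {G x}"
proof
  have "x \<in> (S \<union> S\<inverse>)\<^sup>* `` {x}" by simp
  then show "(T \<union> T\<inverse>)\<^sup>* `` {G x} \<subseteq> (T \<union> T\<inverse>)\<^sup>* `` (G ` ((S \<union> S\<inverse>)\<^sup>* `` {x}))"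
    by (intro Image_mono) auto
  show "(T \<union> T\<inverse>)\<^sup>* `` (G ` ((S \<union> S\<inverse>)\<^sup>* `` {x})) \<subseteq> (T \<union> T\<inverse>)\<^sup>* `` {G x}"
  proof
    fix z assume "z \<in> (T \<union> T\<inverse>)\<^sup>* `` (G ` ((S \<union> S\<inverse>)\<^sup>* `` {x}))"
    then obtain y where y: "(x, y) \<in> (S \<union> S\<inverse>)\<^sup>*" "(G y, z) \<in> (T \<union> T\<inverse>)\<^sup>*" by auto
    have "(G x, G y) \<in> (T \<union> T\<inverse>)\<^sup>*" using rel_resp[OF y(1) assms] .
    then have "(G x, z) \<in> (T \<union> T\<inverse>)\<^sup>*" using y(2) by (rule rtrancl_trans)
    then show "z \<in> (T \<union> T\<inverse>)\<^sup>* `` {G x}" by simp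
  qed
qed

lemma class_eq:
  assumes "(x, y) \<in> (S \<union> S\<inverse>)\<^sup>*"
  shows "(S \<union> S\<inverse>)\<^sup>* `` {x} = (S \<union> S\<inverse>)\<^sup>* `` {y}"
proof -
  have yx: "(y, x) \<in> (S \<union> S\<inverse>)\<^sup>*" using assms by (rule rel_sym)
  show ?thesis
  proof (intro equalityI subsetI)
    fix z assume "z \<in> (S \<union> S\<inverse>)\<^sup>* `` {x}"
    then have "(x, z) \<in> (S \<union> S\<inverse>)\<^sup>*" by simp
    then have "(y, z) \<in> (S \<union> S\<inverse>)\<^sup>*" using yx by (rule rtrancl_trans[rotated])
    then show "z \<in> (S \<union> S\<inverse>)\<^sup>* `` {y}" by simp
  next
    fix z assume "z \<in> (S \<union> S\<inverse>)\<^sup>* `` {y}"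
    then have "(y, z) \<in> (S \<union> S\<inverse>)\<^sup>*" by simp
    then have "(x, z) \<in> (S \<union> S\<inverse>)\<^sup>*" using assms by (rule rtrancl_trans[rotated])
    then show "z \<in> (S \<union> S\<inverse>)\<^sup>* `` {x}" by simp
  qed
qed

lemma lin_simps [simp]:
  "Obj (lin ws) = {0..length ws}" "Mor (lin ws) = {(i, j). larr ws i j}"
  "Dom (lin ws) = fst" "Cod (lin ws) = snd" "Id (lin ws) = (\<lambda>i. (i, i))"
  "Comp (lin ws) = (\<lambda>g f. (fst f, snd g))"
  "Fwd (lin ws) = {(i, j). larr ws i j \<and> i \<le> j}"
  "Bwd (lin ws) = {(i, j). larr ws i j \<and> j \<le> i}"
  by (simp_all add: lin_def)

lemma larr_refl: "i \<le> length ws \<Longrightarrow> larr ws i i"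
  unfolding larr_def by auto

lemma larr_le: "larr ws i j \<Longrightarrow> i \<le> length ws \<and> j \<le> length ws"
  unfolding larr_def by auto

lemma larr_trans:
  assumes ab: "larr ws a b" and bc: "larr ws b c" shows "larr ws a c"
proof -
  have 1: "\<And>k. a \<le> k \<Longrightarrow> k < b \<Longrightarrow> ws ! k \<noteq> SegT" "\<And>k. b \<le> k \<Longrightarrow> k < a \<Longrightarrow> ws ! k \<noteq> SegS"
    "a \<le> length ws" using ab unfolding larr_def by auto
  have 2: "\<And>k. b \<le> k \<Longrightarrow> k < c \<Longrightarrow> ws ! k \<noteq> SegT" "\<And>k. c \<le> k \<Longrightarrow> k < b \<Longrightarrow> ws ! k \<noteq> SegS"
    "c \<le> length ws" using bc unfolding larr_def by auto
  have 3: "ws ! k \<noteq> SegT" if "a \<le> k" "k < c" for k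
  proof (cases "k < b")
    case True then show ?thesis using 1(1) that by simp
  next
    case False then show ?thesis using 2(1) that by simp
  qed
  have 4: "ws ! k \<noteq> SegS" if "c \<le> k" "k < a" for k
  proof (cases "k < b")
    case True then show ?thesis using 2(2) that by simp
  next
    case False then show ?thesis using 1(2) that by simp
  qed
  show ?thesis unfolding larr_def using 1(3) 2(3) 3 4 by blast
qed

lemma larr_between:
  assumes ax: "larr ws a x" and ay: "larr ws a y" and "x \<le> z" "z \<le> y" shows "larr ws a z"
proof -
  have 1: "\<And>k. a \<le> k \<Longrightarrow> k < y \<Longrightarrow> ws ! k \<noteq> SegT" "y \<le> length ws" "a \<le> length ws"
    using ay unfolding larr_def by auto
  have 2: "\<And>k. x \<le> k \<Longrightarrow> k < a \<Longrightarrow> ws ! k \<noteq> SegS"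
    using ax unfolding larr_def by auto
  show ?thesis unfolding larr_def
  proof (intro conjI allI impI)
    show "z \<le> length ws" using 1(2) assms(4) by simp
    show "a \<le> length ws" by (fact 1(3))
    fix k
    show "a \<le> k \<and> k < z \<Longrightarrow> ws ! k \<noteq> SegT" using 1(1) assms(4) by simp
    show "z \<le> k \<and> k < a \<Longrightarrow> ws ! k \<noteq> SegS" using 2 assms(3) by simp
  qed
qed

lemma hom_iff: "f \<in> hom C a b \<longleftrightarrow> f \<in> Mor C \<and> Dom C f = a \<and> Cod C f = b"
  unfolding hom_def by simp

lemma cat_comp:
  assumes "category C" "f \<in> hom C a b" "g \<in> hom C b c" shows "Comp C g f \<in> hom C a c"
proof -
  have "\<forall>f\<in>Mor C. \<forall>g\<in>Mor C. Cod C f = Dom C g \<longrightarrow> Comp C g f \<in> hom C (Dom C f) (Cod C g)"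
    using assms(1) unfolding category_def by simp
  then show ?thesis using assms(2,3) unfolding hom_iff by auto
qed

lemma cat_assoc:
  assumes "category C" "f \<in> hom C a b" "g \<in> hom C b c" "h \<in> hom C c d"
  shows "Comp C h (Comp C g f) = Comp C (Comp C h g) f"
proof -
  have "\<forall>f\<in>Mor C. \<forall>g\<in>Mor C. \<forall>h\<in>Mor C. Cod C f = Dom C g \<longrightarrow> Cod C g = Dom C h \<longrightarrow>
        Comp C h (Comp C g f) = Comp C (Comp C h g) f"
    using assms(1) unfolding category_def by simp
  then show ?thesis using assms(2-4) unfolding hom_iff by auto
qed

lemma cat_idl:
  assumes "category C" "f \<in> hom C a b" shows "Comp C (Id C b) f = f"
proof -
  have "\<forall>f\<in>Mor C. Comp C (Id C (Cod C f)) f = f \<and> Comp C f (Id C (Dom C f)) = f"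
    using assms(1) unfolding category_def by simp
  then show ?thesis using assms(2) unfolding hom_iff by auto
qed

lemma cat_idr:
  assumes "category C" "f \<in> hom C a b" shows "Comp C f (Id C a) = f"
proof -
  have "\<forall>f\<in>Mor C. Comp C (Id C (Cod C f)) f = f \<and> Comp C f (Id C (Dom C f)) = f"
    using assms(1) unfolding category_def by simp
  then show ?thesis using assms(2) unfolding hom_iff by auto
qed

lemma cat_id: "category C \<Longrightarrow> a \<in> Obj C \<Longrightarrow> Id C a \<in> hom C a a"
  unfolding category_def by simp

lemma cat_cod: "category C \<Longrightarrow> f \<in> Mor C \<Longrightarrow> Cod C f \<in> Obj C"
  unfolding category_def by simp

section \<open>Paths\<close>

lemma path_functor: "is_path C p \<Longrightarrow> functor (lin (pword p)) C (pobj p) (pmor p)"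
  unfolding is_path_def dfunctor_def by simp

lemma path_obj: "is_path C p \<Longrightarrow> i \<le> length (pword p) \<Longrightarrow> pobj p i \<in> Obj C"
  using path_functor[of C p] unfolding functor_def by simp

lemma path_mor: "pmor p (i, j) \<in> hom C (pobj p i) (pobj p j)" if "is_path C p" "larr (pword p) i j"
proof -
  have "\<forall>f\<in>Mor (lin (pword p)). pmor p f \<in> hom C (pobj p (Dom (lin (pword p)) f)) (pobj p (Cod (lin (pword p)) f))"
    using path_functor[of C p] that unfolding functor_def by blast
  then show ?thesis using that by simp
qed

lemma path_id: "is_path C p \<Longrightarrow> i \<le> length (pword p) \<Longrightarrow> pmor p (i, i) = Id C (pobj p i)"
  using path_functor[of C p] unfolding functor_def by simp

lemma path_comp:
  assumes p: "is_path C p" and ab: "larr (pword p) a b" and bc: "larr (pword p) b c"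
  shows "Comp C (pmor p (b, c)) (pmor p (a, b)) = pmor p (a, c)"
proof -
  have "\<forall>f\<in>Mor (lin (pword p)). \<forall>g\<in>Mor (lin (pword p)). Cod (lin (pword p)) f = Dom (lin (pword p)) g \<longrightarrow>
      pmor p (Comp (lin (pword p)) g f) = Comp C (pmor p g) (pmor p f)"
    using path_functor[OF p] unfolding functor_def by blast
  then have "pmor p (Comp (lin (pword p)) (b, c) (a, b)) = Comp C (pmor p (b, c)) (pmor p (a, b))"
    using ab bc by simp
  then show ?thesis by simp
qed

section \<open>Track objects\<close>

lemma carrier_iff: "(i, h) \<in> track_carrier C p c \<longleftrightarrow> i \<le> length (pword p) \<and> h \<in> hom C c (pobj p i)"
  unfolding track_carrier_def by simp

lemma step_in: "(i, h) \<in> track_carrier C p c \<Longrightarrow> larr (pword p) i j \<Longrightarrow>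
    ((i, h), (j, Comp C (pmor p (i, j)) h)) \<in> track_step C p c"
  unfolding track_step_def by force

lemma stepE:
  assumes "(x, y) \<in> track_step C p c"
  obtains i j h where "x = (i, h)" "y = (j, Comp C (pmor p (i, j)) h)"
    "(i, h) \<in> track_carrier C p c" "larr (pword p) i j"
  using assms unfolding track_step_def by force

lemma step_rel: "(x, y) \<in> track_step C p c \<Longrightarrow> (x, y) \<in> track_rel C p c"
  unfolding track_rel_def by blast

lemma step_rel': "(x, y) \<in> track_step C p c \<Longrightarrow> (y, x) \<in> track_rel C p c"
  unfolding track_rel_def by blast

lemma rel_trans: "(x, y) \<in> track_rel C p c \<Longrightarrow> (y, z) \<in> track_rel C p c \<Longrightarrow> (x, z) \<in> track_rel C p c"
  unfolding track_rel_def by (meson rtrancl_trans)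

lemma rel_symm: "(x, y) \<in> track_rel C p c \<Longrightarrow> (y, x) \<in> track_rel C p c"
  unfolding track_rel_def by (rule rel_sym)

lemma rel_class_eq: "(x, y) \<in> track_rel C p c \<Longrightarrow> track_rel C p c `` {x} = track_rel C p c `` {y}"
  unfolding track_rel_def by (rule class_eq)

lemma rel_class_resp:
  assumes "\<And>a b. (a, b) \<in> track_step C p c \<Longrightarrow> (G a, G b) \<in> track_rel C q d"
  shows "track_rel C q d `` (G ` (track_rel C p c `` {x})) = track_rel C q d `` {G x}"
  using assms unfolding track_rel_def by (rule class_resp)

lemma elt_track:
  assumes "X \<in> Elt (track C p) c"
  obtains i h where "c \<in> Obj C" "(i, h) \<in> track_carrier C p c" "X = track_rel C p c `` {(i, h)}"
  using assms unfolding track_def quotient_def by (auto split: if_splits)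

lemma elt_trackI: "c \<in> Obj C \<Longrightarrow> x \<in> track_carrier C p c \<Longrightarrow> track_rel C p c `` {x} \<in> Elt (track C p) c"
  unfolding track_def by (simp add: quotientI)

definition pre :: "('o, 'm, 'z) cat_scheme \<Rightarrow> 'm \<Rightarrow> nat \<times> 'm \<Rightarrow> nat \<times> 'm" where
  "pre C f = (\<lambda>(i, h). (i, Comp C h f))"

lemma pre_resp:
  assumes cat: "category C" and p: "is_path C p" and f: "f \<in> Mor C"
    and st: "(x, y) \<in> track_step C p (Cod C f)"
  shows "(pre C f x, pre C f y) \<in> track_rel C p (Dom C f)"
proof -
  obtain i j h where x: "x = (i, h)" and y: "y = (j, Comp C (pmor p (i, j)) h)"
    and c: "(i, h) \<in> track_carrier C p (Cod C f)" and l: "larr (pword p) i j"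
    using st by (rule stepE)
  have fh: "f \<in> hom C (Dom C f) (Cod C f)" using f by (simp add: hom_iff)
  have hh: "h \<in> hom C (Cod C f) (pobj p i)" using c by (simp add: carrier_iff)
  have c2: "(i, Comp C h f) \<in> track_carrier C p (Dom C f)"
    using c cat_comp[OF cat fh hh] by (simp add: carrier_iff)
  have "Comp C (Comp C (pmor p (i, j)) h) f = Comp C (pmor p (i, j)) (Comp C h f)"
    using cat_assoc[OF cat fh hh path_mor[OF p l]] by simp
  then show ?thesis using step_rel[OF step_in[OF c2 l]] x y by (simp add: pre_def)
qed

lemma act_class:
  assumes cat: "category C" and p: "is_path C p" and f: "f \<in> Mor C"
  shows "Act (track C p) f (track_rel C p (Cod C f) `` {x}) = track_rel C p (Dom C f) `` {pre C f x}"
proof -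
  have "Act (track C p) f (track_rel C p (Cod C f) `` {x}) =
      track_rel C p (Dom C f) `` (pre C f ` (track_rel C p (Cod C f) `` {x}))"
    unfolding track_def pre_def by simp
  also have "\<dots> = track_rel C p (Dom C f) `` {pre C f x}"
    by (rule rel_class_resp, rule pre_resp[OF cat p f])
  finally show ?thesis .
qed

lemma dfunctor_functor: "dfunctor C D Fo Fm \<Longrightarrow> functor C D Fo Fm"
  unfolding dfunctor_def by simp

lemma functor_mor: "functor C D Fo Fm \<Longrightarrow> f \<in> Mor C \<Longrightarrow> Fm f \<in> hom D (Fo (Dom C f)) (Fo (Cod C f))"
  unfolding functor_def by simp

lemma dfunctor_fwd: "dfunctor C D Fo Fm \<Longrightarrow> f \<in> Fwd C \<Longrightarrow> Fm f \<in> Fwd D"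
  unfolding dfunctor_def by auto

lemma dfunctor_bwd: "dfunctor C D Fo Fm \<Longrightarrow> f \<in> Bwd C \<Longrightarrow> Fm f \<in> Bwd D"
  unfolding dfunctor_def by auto

locale pathle =
  fixes C :: "('o, 'm, 'z) dcat_scheme" and p q :: "('o, 'm) path"
    and Fo :: "nat \<Rightarrow> nat" and Fm :: "nat \<times> nat \<Rightarrow> nat \<times> nat"
  assumes cat: "category C"
    and pp: "is_path C p" and qp: "is_path C q"
    and F: "dfunctor (lin (pword p)) (lin (pword q)) Fo Fm"
    and F0: "Fo 0 = 0" and Fn: "Fo (length (pword p)) = length (pword q)"
    and Fobj: "\<forall>x\<in>Obj (lin (pword p)). pobj q (Fo x) = pobj p x"
    and Fmor: "\<forall>u\<in>Mor (lin (pword p)). pmor q (Fm u) = pmor p u"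
begin

abbreviation "wp \<equiv> pword p"
abbreviation "wq \<equiv> pword q"
abbreviation "n \<equiv> length (pword p)"
abbreviation "m \<equiv> length (pword q)"

lemma Fm_hom: "larr wp i j \<Longrightarrow> Fm (i, j) \<in> hom (lin wq) (Fo i) (Fo j)"
  using functor_mor[OF dfunctor_functor[OF F], of "(i, j)"] by simp

lemma Fm_eq: "larr wp i j \<Longrightarrow> Fm (i, j) = (Fo i, Fo j)"
  using Fm_hom[of i j] unfolding hom_def by auto

lemma mor_J: "larr wp i j \<Longrightarrow> larr wq (Fo i) (Fo j)"
  using Fm_hom[of i j] unfolding hom_def by auto

lemma pobj_F: "i \<le> n \<Longrightarrow> pobj q (Fo i) = pobj p i"
  using Fobj by simp

lemma pmor_F: "larr wp i j \<Longrightarrow> pmor q (Fo i, Fo j) = pmor p (i, j)"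
  using Fmor Fm_eq[of i j] by force

lemma Fo_le: "i \<le> n \<Longrightarrow> Fo i \<le> m"
  using larr_le[OF mor_J[OF larr_refl[of i wp]]] by simp

lemma mono_step: "k < n \<Longrightarrow> Fo k \<le> Fo (Suc k)"
proof -
  assume k: "k < n"
  show ?thesis
  proof (cases "wp ! k = SegT")
    case False
    have l: "larr wp k (Suc k)" unfolding larr_def using k False
      by (auto simp: less_Suc_eq_le le_antisym)
    have "(k, Suc k) \<in> Fwd (lin wp)" using l by simp
    then have "Fm (k, Suc k) \<in> Fwd (lin wq)" by (rule dfunctor_fwd[OF F])
    then show ?thesis using Fm_eq[OF l] by simp
  next
    case True
    have l: "larr wp (Suc k) k" unfolding larr_def using k True
      by (auto simp: less_Suc_eq_le le_antisym)
    have "(Suc k, k) \<in> Bwd (lin wp)" using l by simp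
    then have "Fm (Suc k, k) \<in> Bwd (lin wq)" by (rule dfunctor_bwd[OF F])
    then show ?thesis using Fm_eq[OF l] by simp
  qed
qed

lemma mono: "i \<le> j \<Longrightarrow> j \<le> n \<Longrightarrow> Fo i \<le> Fo j"
proof (induction j rule: dec_induct)
  case base then show ?case by simp
next
  case (step k)
  then show ?case using mono_step[of k] by simp
qed

definition gg :: "nat \<Rightarrow> nat \<Rightarrow> 'm \<Rightarrow> 'm" where
  "gg a i h = Comp C (pmor q (a, Fo i)) h"

lemma gg_carrier:
  assumes "i \<le> n" "larr wq a (Fo i)" "h \<in> hom C c (pobj q a)"
  shows "(i, gg a i h) \<in> track_carrier C p c"
  using cat_comp[OF cat assms(3) path_mor[OF qp assms(2)]] assms(1)
  by (simp add: carrier_iff gg_def pobj_F)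

lemma single:
  assumes k: "k < n" and l1: "larr wq a (Fo k)" and l2: "larr wq a (Fo (Suc k))"
    and h: "h \<in> hom C c (pobj q a)"
  shows "((k, gg a k h), (Suc k, gg a (Suc k) h)) \<in> track_rel C p c"
proof (cases "wp ! k = SegT")
  case False
  have l: "larr wp k (Suc k)" unfolding larr_def using k False
    by (auto simp: less_Suc_eq_le le_antisym)
  have c: "(k, gg a k h) \<in> track_carrier C p c" using gg_carrier[OF _ l1 h] k by simp
  have "Comp C (pmor p (k, Suc k)) (gg a k h) = Comp C (pmor q (Fo k, Fo (Suc k))) (Comp C (pmor q (a, Fo k)) h)"
    by (simp add: pmor_F[OF l] gg_def)
  also have "\<dots> = Comp C (Comp C (pmor q (Fo k, Fo (Suc k))) (pmor q (a, Fo k))) h"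
    by (rule cat_assoc[OF cat h path_mor[OF qp l1] path_mor[OF qp mor_J[OF l]]])
  also have "\<dots> = gg a (Suc k) h"
    by (simp add: path_comp[OF qp l1 mor_J[OF l]] gg_def)
  finally show ?thesis using step_rel[OF step_in[OF c l]] by simp
next
  case True
  have l: "larr wp (Suc k) k" unfolding larr_def using k True
    by (auto simp: less_Suc_eq_le le_antisym)
  have c: "(Suc k, gg a (Suc k) h) \<in> track_carrier C p c" using gg_carrier[OF _ l2 h] k by simp
  have "Comp C (pmor p (Suc k, k)) (gg a (Suc k) h) = Comp C (pmor q (Fo (Suc k), Fo k)) (Comp C (pmor q (a, Fo (Suc k))) h)"
    by (simp add: pmor_F[OF l] gg_def)
  also have "\<dots> = Comp C (Comp C (pmor q (Fo (Suc k), Fo k)) (pmor q (a, Fo (Suc k)))) h"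
    by (rule cat_assoc[OF cat h path_mor[OF qp l2] path_mor[OF qp mor_J[OF l]]])
  also have "\<dots> = gg a k h"
    by (simp add: path_comp[OF qp l2 mor_J[OF l]] gg_def)
  finally show ?thesis using step_rel'[OF step_in[OF c l]] by simp
qed

lemma key_le:
  assumes ii: "i \<le> i'" and i': "i' \<le> n" and l1: "larr wq a (Fo i)" and l2: "larr wq a (Fo i')"
    and h: "h \<in> hom C c (pobj q a)"
  shows "((i, gg a i h), (i', gg a i' h)) \<in> track_rel C p c"
  using ii i'
proof (induction i' rule: dec_induct)
  case base then show ?case unfolding track_rel_def by simp
next
  case (step k)
  have lk: "larr wq a (Fo k)"
    by (rule larr_between[OF l1 l2 mono[of i k] mono[of k i']]) (use step i' in auto)
  have lk': "larr wq a (Fo (Suc k))"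
    by (rule larr_between[OF l1 l2 mono[of i "Suc k"] mono[of "Suc k" i']]) (use step i' in auto)
  have "((k, gg a k h), (Suc k, gg a (Suc k) h)) \<in> track_rel C p c"
    using single[OF _ lk lk' h] step by simp
  then show ?case using step rel_trans by (metis Suc_leD)
qed

lemma key:
  assumes i: "i \<le> n" and i': "i' \<le> n" and l1: "larr wq a (Fo i)" and l2: "larr wq a (Fo i')"
    and h: "h \<in> hom C c (pobj q a)"
  shows "((i, gg a i h), (i', gg a i' h)) \<in> track_rel C p c"
proof (cases "i \<le> i'")
  case True then show ?thesis using key_le[OF _ i' l1 l2 h] by simp
next
  case False then show ?thesis using key_le[OF _ i l2 l1 h] rel_symm by fastforce
qed

lemma ex_r: "j \<le> m \<Longrightarrow> \<exists>i\<le>n. larr wq j (Fo i)"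
proof -
  assume j: "j \<le> m"
  define K where "K = {k. k \<le> n \<and> Fo k \<le> j}"
  have fin: "finite K" unfolding K_def by simp
  have ne: "0 \<in> K" unfolding K_def using F0 by simp
  define k where "k = Max K"
  have kK: "k \<in> K" unfolding k_def using fin ne Max_in by blast
  have kmax: "\<And>k'. k' \<in> K \<Longrightarrow> k' \<le> k" unfolding k_def using fin by simp
  show ?thesis
  proof (cases "k = n")
    case True
    have "Fo n \<le> j" using kK True unfolding K_def by simp
    then have "Fo n = j" using Fn j by simp
    then show ?thesis using larr_refl[OF j] by blast
  next
    case False
    then have kn: "k < n" using kK unfolding K_def by simp
    have "Suc k \<notin> K" using kmax by fastforce
    then have gt: "j < Fo (Suc k)" using kn unfolding K_def by simp
    have le: "Fo k \<le> j" using kK unfolding K_def by simp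
    show ?thesis
    proof (cases "wp ! k = SegT")
      case False
      have l: "larr wp k (Suc k)" unfolding larr_def using kn False
        by (auto simp: less_Suc_eq_le le_antisym)
      have "larr wq (Fo k) (Fo (Suc k))" using mor_J[OF l] .
      then have "larr wq j (Fo (Suc k))" using le gt j unfolding larr_def by auto
      then show ?thesis using kn by (metis Suc_leI)
    next
      case True
      have l: "larr wp (Suc k) k" unfolding larr_def using kn True
        by (auto simp: less_Suc_eq_le le_antisym)
      have "larr wq (Fo (Suc k)) (Fo k)" using mor_J[OF l] .
      then have "larr wq j (Fo k)" using le gt j unfolding larr_def by auto
      then show ?thesis using kn by (metis less_imp_le)
    qed
  qed
qed

definition r :: "nat \<Rightarrow> nat" where
  "r j = (SOME i. i \<le> n \<and> larr wq j (Fo i))"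

lemma r_spec: "j \<le> m \<Longrightarrow> r j \<le> n \<and> larr wq j (Fo (r j))"
  unfolding r_def using ex_r[of j] by (rule someI_ex) auto

definition Phi :: "nat \<times> 'm \<Rightarrow> nat \<times> 'm" where
  "Phi = (\<lambda>(i, h). (Fo i, h))"

definition Theta :: "nat \<times> 'm \<Rightarrow> nat \<times> 'm" where
  "Theta = (\<lambda>(j, h). (r j, gg j (r j) h))"

lemma Phi_carrier: "x \<in> track_carrier C p c \<Longrightarrow> Phi x \<in> track_carrier C q c"
  by (cases x) (auto simp: carrier_iff Phi_def pobj_F Fo_le)

lemma Theta_carrier: "x \<in> track_carrier C q c \<Longrightarrow> Theta x \<in> track_carrier C p c"
proof (cases x)
  case (Pair j h)
  assume "x \<in> track_carrier C q c"
  then have j: "j \<le> m" and h: "h \<in> hom C c (pobj q j)" using Pair by (auto simp: carrier_iff)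
  show ?thesis using gg_carrier[OF _ _ h] r_spec[OF j] Pair by (simp add: Theta_def)
qed

lemma Phi_resp: "(x, y) \<in> track_step C p c \<Longrightarrow> (Phi x, Phi y) \<in> track_rel C q c"
proof -
  assume "(x, y) \<in> track_step C p c"
  then obtain i j h where x: "x = (i, h)" and y: "y = (j, Comp C (pmor p (i, j)) h)"
    and c: "(i, h) \<in> track_carrier C p c" and l: "larr wp i j" by (rule stepE)
  have "Phi x \<in> track_carrier C q c" using Phi_carrier c x by simp
  then have "((Fo i, h), (Fo j, Comp C (pmor q (Fo i, Fo j)) h)) \<in> track_step C q c"
    using step_in[of "Fo i" h C q c "Fo j"] mor_J[OF l] x by (simp add: Phi_def)
  then show ?thesis using x y step_rel by (simp add: Phi_def pmor_F[OF l])
qed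

lemma Theta_resp: "(x, y) \<in> track_step C q c \<Longrightarrow> (Theta x, Theta y) \<in> track_rel C p c"
proof -
  assume "(x, y) \<in> track_step C q c"
  then obtain j j' h where x: "x = (j, h)" and y: "y = (j', Comp C (pmor q (j, j')) h)"
    and c: "(j, h) \<in> track_carrier C q c" and l: "larr wq j j'" by (rule stepE)
  have h: "h \<in> hom C c (pobj q j)" and j: "j \<le> m" using c by (auto simp: carrier_iff)
  have j': "j' \<le> m" using larr_le[OF l] by simp
  have r1: "r j \<le> n" "larr wq j (Fo (r j))" using r_spec[OF j] by auto
  have r2: "r j' \<le> n" "larr wq j' (Fo (r j'))" using r_spec[OF j'] by auto
  have "gg j' (r j') (Comp C (pmor q (j, j')) h) = Comp C (Comp C (pmor q (j', Fo (r j'))) (pmor q (j, j'))) h"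
    unfolding gg_def by (rule cat_assoc[OF cat h path_mor[OF qp l] path_mor[OF qp r2(2)]])
  also have "\<dots> = gg j (r j') h" by (simp add: path_comp[OF qp l r2(2)] gg_def)
  finally have e: "gg j' (r j') (Comp C (pmor q (j, j')) h) = gg j (r j') h" .
  have "((r j, gg j (r j) h), (r j', gg j (r j') h)) \<in> track_rel C p c"
    by (rule key[OF r1(1) r2(1) r1(2) larr_trans[OF l r2(2)] h])
  then show ?thesis using x y e by (simp add: Theta_def)
qed

definition eta :: "'o \<Rightarrow> (nat \<times> 'm) set \<Rightarrow> (nat \<times> 'm) set" where
  "eta c X = track_rel C q c `` (Phi ` X)"

definition theta :: "'o \<Rightarrow> (nat \<times> 'm) set \<Rightarrow> (nat \<times> 'm) set" where
  "theta c X = track_rel C p c `` (Theta ` X)"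

lemma eta_class: "eta c (track_rel C p c `` {x}) = track_rel C q c `` {Phi x}"
  unfolding eta_def by (rule rel_class_resp, rule Phi_resp)

lemma theta_class: "theta c (track_rel C q c `` {x}) = track_rel C p c `` {Theta x}"
  unfolding theta_def by (rule rel_class_resp, rule Theta_resp)


lemma start_p: "Start (track C p) = {(pobj p 0, track_rel C p (pobj p 0) `` {(0, Id C (pobj p 0))})}"
  unfolding track_def by simp
lemma start_q: "Start (track C q) = {(pobj q 0, track_rel C q (pobj q 0) `` {(0, Id C (pobj q 0))})}"
  unfolding track_def by simp
lemma acc_p: "Accept (track C p) = {(pobj p n, track_rel C p (pobj p n) `` {(n, Id C (pobj p n))})}"
  unfolding track_def by simp
lemma acc_q: "Accept (track C q) = {(pobj q m, track_rel C q (pobj q m) `` {(m, Id C (pobj q m))})}"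
  unfolding track_def by simp

lemma gg_self:
  assumes i: "i \<le> n" and h: "h \<in> hom C c (pobj q (Fo i))"
  shows "gg (Fo i) i h = h"
proof -
  have "pmor q (Fo i, Fo i) = Id C (pobj q (Fo i))" using path_id[OF qp Fo_le[OF i]] .
  then show ?thesis unfolding gg_def using cat_idl[OF cat h] by simp
qed

lemma pre_Phi: "Phi (pre C f x) = pre C f (Phi x)"
  by (cases x) (simp add: Phi_def pre_def)

lemma pre_Theta:
  assumes f: "f \<in> Mor C" and x: "x \<in> track_carrier C q (Cod C f)"
  shows "Theta (pre C f x) = pre C f (Theta x)"
proof (cases x)
  case (Pair j h)
  have h: "h \<in> hom C (Cod C f) (pobj q j)" and j: "j \<le> m" using x Pair by (auto simp: carrier_iff)
  have fh: "f \<in> hom C (Dom C f) (Cod C f)" using f by (simp add: hom_iff)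
  have "Comp C (pmor q (j, Fo (r j))) (Comp C h f) = Comp C (Comp C (pmor q (j, Fo (r j))) h) f"
    by (rule cat_assoc[OF cat fh h path_mor[OF qp conjunct2[OF r_spec[OF j]]]])
  then show ?thesis using Pair by (simp add: Theta_def pre_def gg_def)
qed

lemma id_hom_q: "i \<le> m \<Longrightarrow> Id C (pobj q i) \<in> hom C (pobj q i) (pobj q i)"
  by (rule cat_id[OF cat path_obj[OF qp]])

lemma eta_hom: "aut_hom C (track C p) (track C q) eta"
  unfolding aut_hom_def
proof (intro conjI ballI)
  fix a X assume a: "a \<in> Obj C" and X: "X \<in> Elt (track C p) a"
  then obtain x where x: "x \<in> track_carrier C p a" "X = track_rel C p a `` {x}"
    by (metis elt_track)
  show "eta a X \<in> Elt (track C q) a"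
    using x eta_class elt_trackI[OF a Phi_carrier[OF x(1)]] by simp
next
  fix f X assume f: "f \<in> Mor C" and X: "X \<in> Elt (track C p) (Cod C f)"
  then obtain x where x: "x \<in> track_carrier C p (Cod C f)" "X = track_rel C p (Cod C f) `` {x}"
    by (metis elt_track)
  show "eta (Dom C f) (Act (track C p) f X) = Act (track C q) f (eta (Cod C f) X)"
    using x act_class[OF cat pp f] act_class[OF cat qp f] eta_class pre_Phi by simp
next
  fix ax assume "ax \<in> Start (track C p)"
  then have ax: "ax = (pobj p 0, track_rel C p (pobj p 0) `` {(0, Id C (pobj p 0))})"
    using start_p by simp
  have "pobj q 0 = pobj p 0" using pobj_F[of 0] F0 by simp
  then show "case ax of (a, x) \<Rightarrow> (a, eta a x) \<in> Start (track C q)"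
    using ax eta_class start_q F0 by (simp add: Phi_def)
next
  fix ax assume "ax \<in> Accept (track C p)"
  then have ax: "ax = (pobj p n, track_rel C p (pobj p n) `` {(n, Id C (pobj p n))})"
    using acc_p by simp
  have "pobj q m = pobj p n" using pobj_F[of n] Fn by simp
  then show "case ax of (a, x) \<Rightarrow> (a, eta a x) \<in> Accept (track C q)"
    using ax eta_class acc_q Fn by (simp add: Phi_def)
qed

lemma theta_end:
  assumes i: "i \<le> n" and j: "j = Fo i"
  shows "track_rel C p (pobj q j) `` {Theta (j, Id C (pobj q j))} = track_rel C p (pobj p i) `` {(i, Id C (pobj p i))}"
proof -
  have jm: "j \<le> m" using Fo_le[OF i] j by simp
  have e: "pobj q j = pobj p i" using pobj_F[OF i] j by simp
  have r: "r j \<le> n" "larr wq j (Fo (r j))" using r_spec[OF jm] by auto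
  have hid: "Id C (pobj q j) \<in> hom C (pobj q j) (pobj q j)" using id_hom_q[OF jm] .
  have "((r j, gg j (r j) (Id C (pobj q j))), (i, gg j i (Id C (pobj q j)))) \<in> track_rel C p (pobj q j)"
    by (rule key[OF r(1) i r(2) _ hid]) (simp add: j larr_refl[OF Fo_le[OF i]])
  moreover have "gg j i (Id C (pobj q j)) = Id C (pobj q j)"
    using gg_self[OF i, of "Id C (pobj q j)" "pobj q j"] hid j by simp
  ultimately show ?thesis using rel_class_eq e by (simp add: Theta_def)
qed

lemma theta_hom: "aut_hom C (track C q) (track C p) theta"
  unfolding aut_hom_def
proof (intro conjI ballI)
  fix a X assume a: "a \<in> Obj C" and X: "X \<in> Elt (track C q) a"
  then obtain x where x: "x \<in> track_carrier C q a" "X = track_rel C q a `` {x}"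
    by (metis elt_track)
  show "theta a X \<in> Elt (track C p) a"
    using x theta_class elt_trackI[OF a Theta_carrier[OF x(1)]] by simp
next
  fix f X assume f: "f \<in> Mor C" and X: "X \<in> Elt (track C q) (Cod C f)"
  then obtain x where x: "x \<in> track_carrier C q (Cod C f)" "X = track_rel C q (Cod C f) `` {x}"
    by (metis elt_track)
  show "theta (Dom C f) (Act (track C q) f X) = Act (track C p) f (theta (Cod C f) X)"
    using x act_class[OF cat pp f] act_class[OF cat qp f] theta_class pre_Theta[OF f x(1)] by simp
next
  fix ax assume "ax \<in> Start (track C q)"
  then have ax: "ax = (pobj q 0, track_rel C q (pobj q 0) `` {(0, Id C (pobj q 0))})"
    using start_q by simp
  have "pobj q 0 = pobj p 0" using pobj_F[of 0] F0 by simp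
  then show "case ax of (a, x) \<Rightarrow> (a, theta a x) \<in> Start (track C p)"
    using ax theta_class start_p theta_end[of 0 0] F0 by simp
next
  fix ax assume "ax \<in> Accept (track C q)"
  then have ax: "ax = (pobj q m, track_rel C q (pobj q m) `` {(m, Id C (pobj q m))})"
    using acc_q by simp
  have "pobj q m = pobj p n" using pobj_F[of n] Fn by simp
  then show "case ax of (a, x) \<Rightarrow> (a, theta a x) \<in> Accept (track C p)"
    using ax theta_class acc_p theta_end[of n m] Fn by simp
qed

lemma iso: "aut_iso C (track C p) (track C q)"
  unfolding aut_iso_def
proof (intro exI conjI ballI)
  show "aut_hom C (track C p) (track C q) eta" by (rule eta_hom)
  show "aut_hom C (track C q) (track C p) theta" by (rule theta_hom)
next
  fix a X assume a: "a \<in> Obj C" and X: "X \<in> Elt (track C p) a"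
  then obtain i h where x: "(i, h) \<in> track_carrier C p a" "X = track_rel C p a `` {(i, h)}"
    by (metis elt_track)
  have i: "i \<le> n" and h: "h \<in> hom C a (pobj p i)" using x(1) by (auto simp: carrier_iff)
  have h': "h \<in> hom C a (pobj q (Fo i))" using h pobj_F[OF i] by simp
  have r: "r (Fo i) \<le> n" "larr wq (Fo i) (Fo (r (Fo i)))" using r_spec[OF Fo_le[OF i]] by auto
  have "((r (Fo i), gg (Fo i) (r (Fo i)) h), (i, gg (Fo i) i h)) \<in> track_rel C p a"
    by (rule key[OF r(1) i r(2) larr_refl[OF Fo_le[OF i]] h'])
  then have "track_rel C p a `` {Theta (Fo i, h)} = track_rel C p a `` {(i, h)}"
    using gg_self[OF i h'] rel_class_eq by (simp add: Theta_def)
  then show "theta a (eta a X) = X" using x(2) eta_class theta_class by (simp add: Phi_def)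
next
  fix a Y assume a: "a \<in> Obj C" and Y: "Y \<in> Elt (track C q) a"
  then obtain j h where y: "(j, h) \<in> track_carrier C q a" "Y = track_rel C q a `` {(j, h)}"
    by (metis elt_track)
  have j: "j \<le> m" using y(1) by (auto simp: carrier_iff)
  have r: "r j \<le> n" "larr wq j (Fo (r j))" using r_spec[OF j] by auto
  have "((j, h), (Fo (r j), Comp C (pmor q (j, Fo (r j))) h)) \<in> track_step C q a"
    by (rule step_in[OF y(1) r(2)])
  then have "track_rel C q a `` {(j, h)} = track_rel C q a `` {(Fo (r j), Comp C (pmor q (j, Fo (r j))) h)}"
    by (rule rel_class_eq[OF step_rel])
  then have "track_rel C q a `` {(j, h)} = track_rel C q a `` {Phi (Theta (j, h))}"
    by (simp add: Theta_def Phi_def gg_def)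
  note eq = this
  have "theta a Y = track_rel C p a `` {Theta (j, h)}" using y(2) theta_class by simp
  then have "eta a (theta a Y) = track_rel C q a `` {Phi (Theta (j, h))}" using eta_class by simp
  then show "eta a (theta a Y) = Y" using y(2) eq by simp
qed

end

lemma le_iso:
  assumes cat: "category C" and le: "path_le C p q"
  shows "aut_iso C (track C p) (track C q)"
proof -
  obtain Fo Fm where F: "dfunctor (lin (pword p)) (lin (pword q)) Fo Fm"
    "Fo 0 = 0" "Fo (length (pword p)) = length (pword q)"
    "\<forall>x\<in>Obj (lin (pword p)). pobj q (Fo x) = pobj p x"
    "\<forall>u\<in>Mor (lin (pword p)). pmor q (Fm u) = pmor p u"
    and pp: "is_path C p" and qp: "is_path C q"
    using le unfolding path_le_def by blast
  interpret pathle C p q Fo Fm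
    using cat pp qp F by unfold_locales
  show ?thesis by (rule iso)
qed

theorem proposition7:
  fixes C :: "('o, 'm) dcat" and \<omega> \<psi> :: "('o, 'm) path"
  assumes "dcategory C"
    and "is_path C \<omega>" and "is_path C \<psi>"
    and "path_equiv C \<omega> \<psi>"
  shows "aut_iso C (track C \<omega>) (track C \<psi>)"
proof -
  have cat: "category C" using assms(1) unfolding dcategory_def by simp
  have "(symclp (path_le C))\<^sup>*\<^sup>* \<omega> \<psi>" using assms(4) unfolding path_equiv_def equivclp_def .
  then show ?thesis
  proof (induction rule: rtranclp_induct)
    case base then show ?case by (rule aut_iso_refl)
  next
    case (step y z)
    from step(2) have "aut_iso C (track C y) (track C z)"
    proof (cases rule: symclpE)
      case base then show ?thesis by (rule le_iso[OF cat])
    next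
      case sym then show ?thesis by (rule aut_iso_sym[OF le_iso[OF cat]])
    qed
    then show ?case by (rule aut_iso_trans[OF cat step(3)])
  qed
qed
end
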